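(* Let $r\ge 3$ and $Y,Z\subseteq\{1,\dots,r-1\}$. (1) The Dynkin diagram of $C_{\Phi_{r,Z}}$ is of type $D'_r$ if $r-1\in Z$ and of type $D_r$ if $r-1\notin Z$. (2) The Dynkin diagram of $C_{\Psi_{r,Y}}$ is of type $C_r$ if $r-1\in Y$ and of type $A_r$ if $r-1\notin Y$.
   Context: In $\mathbb{Z}^r$ with standard basis $\alpha_1,\dots,\alpha_r$ let $\eta_{i,j}=\sum_{k=i}^j\alpha_k$ for $i\le j$ and $\eta_{i,j}=0$ for $i>j$. For $Z\subseteq\{1,\dots,r-1\}$, $\Phi_{r,Z}$ consists of $\eta_{i,j-1}$ ($1\le i<j\le r$), $\eta_{i,r-2}+\alpha_r$ ($1\le i<r$), $\eta_{i,r}+\eta_{j,r-2}$ ($1\le i<j<r$), $\eta_{j,r}+\eta_{j,r-2}$ ($j\in Z$). For $Y\subseteq\{1,\dots,r-1\}$, $\Psi_{r,Y}$ consists of $\eta_{i,j}$ ($1\le i\le j\le r$), $\eta_{i,r}+\eta_{j,r-1}$ ($1\le i<j<r$), $\eta_{j,r}+\eta_{j,r-1}$ ($j\in Y$). For finite $\Lambda\subseteq\mathbb{Z}^r$, $C_\Lambda=(c_{ij})$ has $c_{ii}=2$ and $c_{ij}=-\max\{k\ge0: k\alpha_i+\alpha_j\in\Lambda\}$ for $i\ne j$. Its Dynkin diagram has vertices $1,\dots,r$ with an arrow to $i$ labelled $-c_{ij}$ iff $c_{ij}\ne0$. Type $X_r$ ($X=A,C,D$) means equal to the corresponding finite-type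 Cartan matrix up to relabelling; type $D'_r$: $c_{ij}=c_{ji}=-1$ exactly for the pairs $\{k,k+1\}$ ($1\le k\le r-3$), $\{r-2,r-1\}$, $\{r-2,r\}$, $\{r-1,r\}$, and $c_{ij}=0$ otherwise. *)

theory Defs
  imports Main "HOL-Library.Function_Algebras"
begin

text \<open>Elements of Z^r are modelled as functions nat => int; the standard basis
  vector alpha_i (1 <= i <= r) is the indicator of i.\<close>

definition alpha :: "nat \<Rightarrow> nat \<Rightarrow> int" where
  "alpha i = (\<lambda>k. if k = i then 1 else 0)"

definition eta :: "nat \<Rightarrow> nat \<Rightarrow> nat \<Rightarrow> int" where
  "eta i j = (\<lambda>x. \<Sum>k\<in>{i..j}. alpha k x)"

definition Phi :: "nat \<Rightarrow> nat set \<Rightarrow> (nat \<Rightarrow> int) set" where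
  "Phi r Z =
     {eta i (j - 1) | i j. 1 \<le> i \<and> i < j \<and> j \<le> r}
   \<union> {eta i (r - 2) + alpha r | i. 1 \<le> i \<and> i < r}
   \<union> {eta i r + eta j (r - 2) | i j. 1 \<le> i \<and> i < j \<and> j < r}
   \<union> {eta j r + eta j (r - 2) | j. j \<in> Z}"

definition Psi :: "nat \<Rightarrow> nat set \<Rightarrow> (nat \<Rightarrow> int) set" where
  "Psi r Y =
     {eta i j | i j. 1 \<le> i \<and> i \<le> j \<and> j \<le> r}
   \<union> {eta i r + eta j (r - 1) | i j. 1 \<le> i \<and> i < j \<and> j < r}
   \<union> {eta j r + eta j (r - 1) | j. j \<in> Y}"

text \<open>Cartan matrix C_Lambda: c_ii = 2, c_ij = - max {k. k alpha_i + alpha_j in Lambda}.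
  (The maximum is taken as Sup on nat; for the sets considered here the set is
  finite and nonempty.)\<close>
definition cartan :: "(nat \<Rightarrow> int) set \<Rightarrow> nat \<Rightarrow> nat \<Rightarrow> int" where
  "cartan \<Lambda> i j =
     (if i = j then 2
      else - int (Sup {k::nat. (\<lambda>x. int k * alpha i x + alpha j x) \<in> \<Lambda>}))"

text \<open>Standard finite-type Cartan matrices (Bourbaki labelling, a_ij = <alpha_i^vee, alpha_j>).\<close>
definition cartan_A :: "nat \<Rightarrow> nat \<Rightarrow> nat \<Rightarrow> int" where
  "cartan_A r i j = (if i = j then 2 else if i + 1 = j \<or> j + 1 = i then -1 else 0)"

definition cartan_C :: "nat \<Rightarrow> nat \<Rightarrow> nat \<Rightarrow> int" where
  "cartan_C r i j = (if i = j then 2 else if i = r - 1 \<and> j = r then -2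
                     else if i + 1 = j \<or> j + 1 = i then -1 else 0)"

definition cartan_D :: "nat \<Rightarrow> nat \<Rightarrow> nat \<Rightarrow> int" where
  "cartan_D r i j = (if i = j then 2
     else if (i + 1 = j \<or> j + 1 = i) \<and> max i j \<le> r - 1 then -1
     else if {i, j} = {r - 2, r} then -1 else 0)"

definition cartan_D' :: "nat \<Rightarrow> nat \<Rightarrow> nat \<Rightarrow> int" where
  "cartan_D' r i j = (if i = j then 2
     else if (i + 1 = j \<or> j + 1 = i) \<and> max i j \<le> r - 2 then -1
     else if {i, j} = {r - 2, r - 1} \<or> {i, j} = {r - 2, r} \<or> {i, j} = {r - 1, r} then -1
     else 0)"

definition of_type :: "nat \<Rightarrow> (nat \<Rightarrow> nat \<Rightarrow> int) \<Rightarrow> (nat \<Rightarrow> nat \<Rightarrow> int) \<Rightarrow> bool" where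
  "of_type r C X \<longleftrightarrow> (\<exists>\<sigma>. bij_betw \<sigma> {1..r} {1..r} \<and>
      (\<forall>i\<in>{1..r}. \<forall>j\<in>{1..r}. C (\<sigma> i) (\<sigma> j) = X i j))"

definition of_type_D' :: "nat \<Rightarrow> (nat \<Rightarrow> nat \<Rightarrow> int) \<Rightarrow> bool" where
  "of_type_D' r C \<longleftrightarrow> (\<forall>i\<in>{1..r}. \<forall>j\<in>{1..r}. C i j = cartan_D' r i j)"

end

theory Submission imports Defs begin

lemma eta_eval: "eta i j x = (if i \<le> x \<and> x \<le> j then 1 else 0)"
  unfolding eta_def alpha_def by (simp add: sum.delta)

lemma alpha_eval: "alpha i x = (if x = i then 1 else 0)"
  by (simp add: alpha_def)

definition F :: "nat \<Rightarrow> nat \<Rightarrow> nat \<Rightarrow> nat \<Rightarrow> int" where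
  "F k i j = (\<lambda>x. int k * alpha i x + alpha j x)"

lemma F_eval: "F k i j x = int k * (if x = i then 1 else 0) + (if x = j then 1 else 0)"
  by (simp add: F_def alpha_eval)

lemma int_case:
  assumes h: "\<forall>x. (if a \<le> x \<and> x \<le> c then 1 else 0) = F k i j x"
    and ij: "i \<noteq> j"
  shows "k = 0 \<or> (k = 1 \<and> (i+1=j \<or> j+1=i) \<and> a \<le> min i j \<and> max i j \<le> c)"
proof (rule ccontr)
  assume n: "\<not> ?thesis"
  have hi: "(if a \<le> i \<and> i \<le> c then 1 else 0) = int k" using h[rule_format, of i] ij by (simp add: F_eval)
  have hj: "(if a \<le> j \<and> j \<le> c then 1 else (0::int)) = 1" using h[rule_format, of j] ij by (simp add: F_eval)
  have hm: "(if a \<le> min i j + 1 \<and> min i j + 1 \<le> c then 1 else 0) = int k * (if min i j + 1 = i then 1 else 0) + (if min i j + 1 = j then (1::int) else 0)" using h F_eval by metis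
  show False using hi hj hm n ij by (auto split: if_splits simp: min_def max_def; linarith)
qed

definition PhiC :: "nat \<Rightarrow> nat set \<Rightarrow> nat \<Rightarrow> nat \<Rightarrow> bool" where
  "PhiC r Z i j = ((i+1=j \<or> j+1=i) \<and> max i j \<le> r-1 \<or> (i = r-2 \<and> j = r) \<or> (i = r \<and> j = r-2)
     \<or> ((i = r-1 \<and> j = r \<or> i = r \<and> j = r-1) \<and> r-1\<in>Z))"

definition PsiC :: "nat \<Rightarrow> nat set \<Rightarrow> nat \<Rightarrow> nat \<Rightarrow> nat \<Rightarrow> bool" where
  "PsiC r Y i j k = (k = 0 \<or> (k = 1 \<and> (i+1=j \<or> j+1=i) \<and> max i j \<le> r)
     \<or> (k = 2 \<and> i = r-1 \<and> j = r \<and> r-1\<in>Y))"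

lemma Phi_only:
  assumes m: "F k i j \<in> Phi r Z" and ij: "i \<noteq> j" and r: "r \<ge> 3" and Z: "Z \<subseteq> {1..r-1}"
  shows "k = 0 \<or> (k = 1 \<and> PhiC r Z i j)"
  using m unfolding Phi_def
proof (elim UnE CollectE exE conjE)
  fix a b assume e: "F k i j = eta a (b - 1)" and "1 \<le> a" "a < b" "b \<le> r"
  have "\<forall>x. (if a \<le> x \<and> x \<le> b - 1 then 1 else 0) = F k i j x" using e by (simp add: eta_eval)
  from int_case[OF this ij] show ?thesis using \<open>b \<le> r\<close> unfolding PhiC_def by auto
next
  fix a assume e: "F k i j = eta a (r - 2) + alpha r" and "1 \<le> a" "a < r"
  have h: "\<And>x. F k i j x = (if a \<le> x \<and> x \<le> r - 2 then 1 else 0) + (if x = r then 1 else 0)"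
    using e by (simp add: eta_eval alpha_eval)
  note hs = h[of i] h[of j] h[of a] h[of "r-2"] h[of r]
  show ?thesis using hs ij r \<open>a < r\<close> unfolding F_eval PhiC_def
    by (auto split: if_splits; linarith)
next
  fix a b assume e: "F k i j = eta a r + eta b (r - 2)" and "1 \<le> a" "a < b" "b < r"
  have h: "\<And>x. F k i j x = (if a \<le> x \<and> x \<le> r then 1 else 0) + (if b \<le> x \<and> x \<le> r - 2 then 1 else 0)"
    using e by (simp add: eta_eval)
  note hs = h[of i] h[of j] h[of a] h[of "r-1"] h[of r]
  show ?thesis using hs ij r \<open>a < b\<close> \<open>b < r\<close> unfolding F_eval PhiC_def
    by (auto split: if_splits; linarith)
next
  fix b assume e: "F k i j = eta b r + eta b (r - 2)" and "b \<in> Z"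
  have h: "\<And>x. F k i j x = (if b \<le> x \<and> x \<le> r then 1 else 0) + (if b \<le> x \<and> x \<le> r - 2 then 1 else 0)"
    using e by (simp add: eta_eval)
  have b: "1 \<le> b" "b \<le> r - 1" using \<open>b \<in> Z\<close> Z by auto
  note hs = h[of i] h[of j] h[of b] h[of "r-1"] h[of r]
  show ?thesis using hs ij r b \<open>b \<in> Z\<close> unfolding F_eval PhiC_def
    by (auto split: if_splits; linarith)
qed

lemma Psi_only:
  assumes m: "F k i j \<in> Psi r Y" and ij: "i \<noteq> j" and r: "r \<ge> 3" and Y: "Y \<subseteq> {1..r-1}"
  shows "PsiC r Y i j k"
  using m unfolding Psi_def
proof (elim UnE CollectE exE conjE)
  fix a b assume e: "F k i j = eta a b" and "1 \<le> a" "a \<le> b" "b \<le> r"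
  have "\<forall>x. (if a \<le> x \<and> x \<le> b then 1 else 0) = F k i j x" using e by (simp add: eta_eval)
  from int_case[OF this ij] show ?thesis using \<open>b \<le> r\<close> unfolding PsiC_def by auto
next
  fix a b assume e: "F k i j = eta a r + eta b (r - 1)" and "1 \<le> a" "a < b" "b < r"
  have h: "\<And>x. F k i j x = (if a \<le> x \<and> x \<le> r then 1 else 0) + (if b \<le> x \<and> x \<le> r - 1 then 1 else 0)"
    using e by (simp add: eta_eval)
  note hs = h[of i] h[of j] h[of a] h[of "r-1"] h[of r]
  show ?thesis using hs ij r \<open>a < b\<close> \<open>b < r\<close> unfolding F_eval PsiC_def
    by (auto split: if_splits; linarith)
next
  fix b assume e: "F k i j = eta b r + eta b (r - 1)" and "b \<in> Y"
  have h: "\<And>x. F k i j x = (if b \<le> x \<and> x \<le> r then 1 else 0) + (if b \<le> x \<and> x \<le> r - 1 then 1 else 0)"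
    using e by (simp add: eta_eval)
  have b: "1 \<le> b" "b \<le> r - 1" using \<open>b \<in> Y\<close> Y by auto
  note hs = h[of i] h[of j] h[of b] h[of "r-1"] h[of r]
  show ?thesis using hs ij r b \<open>b \<in> Y\<close> unfolding F_eval PsiC_def
    by (auto split: if_splits; linarith)
qed


lemma P1: "1 \<le> a \<Longrightarrow> a < b \<Longrightarrow> b \<le> r \<Longrightarrow> eta a (b-1) \<in> Phi r Z"
  unfolding Phi_def by blast
lemma P2: "1 \<le> a \<Longrightarrow> a < r \<Longrightarrow> eta a (r-2) + alpha r \<in> Phi r Z"
  unfolding Phi_def by blast
lemma P4: "b \<in> Z \<Longrightarrow> eta b r + eta b (r-2) \<in> Phi r Z"
  unfolding Phi_def by blast
lemma Q1: "1 \<le> a \<Longrightarrow> a \<le> b \<Longrightarrow> b \<le> r \<Longrightarrow> eta a b \<in> Psi r Y"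
  unfolding Psi_def by blast
lemma Q3: "b \<in> Y \<Longrightarrow> eta b r + eta b (r-1) \<in> Psi r Y"
  unfolding Psi_def by blast

lemma Phi_set:
  assumes ij: "i \<noteq> j" "i \<in> {1..r}" "j \<in> {1..r}" and r: "r \<ge> 3" and Z: "Z \<subseteq> {1..r-1}"
  shows "{k. F k i j \<in> Phi r Z} = (if PhiC r Z i j then {0,1} else {0})"
proof -
  have z: "F 0 i j \<in> Phi r Z"
  proof (cases "j \<le> r - 1")
    case True
    have "F 0 i j = eta j ((j+1)-1)" by (rule ext) (simp add: F_eval eta_eval)
    thus ?thesis using P1[of j "j+1" r Z] True ij by (simp; linarith)
  next
    case False
    have "F 0 i j = eta (r-1) (r-2) + alpha r" using False ij
      by (intro ext) (auto simp: F_eval eta_eval alpha_eval)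
    thus ?thesis using P2[of "r-1" r Z] r by simp
  qed
  have o: "F 1 i j \<in> Phi r Z" if c: "PhiC r Z i j"
  proof -
    consider "(i+1=j \<or> j+1=i) \<and> max i j \<le> r-1" | "(i = r-2 \<and> j = r) \<or> (i = r \<and> j = r-2)"
      | "(i = r-1 \<and> j = r \<or> i = r \<and> j = r-1) \<and> r-1\<in>Z" using c unfolding PhiC_def by blast
    then show ?thesis
    proof cases
      case 1
      have e: "F 1 i j = eta (min i j) ((max i j + 1) - 1)" using 1
        by (intro ext) (auto simp: F_eval eta_eval)
      have "eta (min i j) ((max i j + 1) - 1) \<in> Phi r Z" by (rule P1) (use 1 ij in auto)
      thus ?thesis using e by metis
    next
      case 2
      have "F 1 i j = eta (r-2) (r-2) + alpha r" using 2 r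
        by (intro ext) (auto simp: F_eval eta_eval alpha_eval)
      thus ?thesis using P2[of "r-2" r Z] r by simp
    next
      case 3
      have "F 1 i j = eta (r-1) r + eta (r-1) (r-2)" using 3 r
        by (intro ext) (auto simp: F_eval eta_eval)
      thus ?thesis using P4[of "r-1" Z r] 3 by simp
    qed
  qed
  show ?thesis
  proof (cases "PhiC r Z i j")
    case True
    then show ?thesis using z o Phi_only[OF _ ij(1) r Z] by auto
  next
    case False
    then show ?thesis using z Phi_only[OF _ ij(1) r Z] by auto
  qed
qed

lemma Psi_set:
  assumes ij: "i \<noteq> j" "i \<in> {1..r}" "j \<in> {1..r}" and r: "r \<ge> 3" and Y: "Y \<subseteq> {1..r-1}"
  shows "{k. F k i j \<in> Psi r Y} = {k. PsiC r Y i j k}"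
proof -
  have "F k i j \<in> Psi r Y" if c: "PsiC r Y i j k" for k
  proof -
    consider "k = 0" | "k = 1 \<and> (i+1=j \<or> j+1=i) \<and> max i j \<le> r"
      | "k = 2 \<and> i = r-1 \<and> j = r \<and> r-1\<in>Y" using c unfolding PsiC_def by blast
    then show ?thesis
    proof cases
      case 1
      have "F k i j = eta j j" using 1 ij by (intro ext) (auto simp: F_eval eta_eval)
      thus ?thesis using Q1[of j j r Y] ij by simp
    next
      case 2
      have "F k i j = eta (min i j) (max i j)" using 2
        by (intro ext) (auto simp: F_eval eta_eval)
      thus ?thesis using Q1[of "min i j" "max i j" r Y] 2 ij by (simp add: min_def max_def)
    next
      case 3
      have "F k i j = eta (r-1) r + eta (r-1) (r-1)" using 3 r
        by (intro ext) (auto simp: F_eval eta_eval)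
      thus ?thesis using Q3[of "r-1" Y r] 3 by simp
    qed
  qed
  then show ?thesis using Psi_only[OF _ ij(1) r Y] by auto
qed

lemma cartan_F: "cartan \<Lambda> i j = (if i = j then 2 else - int (Sup {k. F k i j \<in> \<Lambda>}))"
  unfolding cartan_def F_def by simp

lemma condD': assumes "r \<ge> 3" "i \<noteq> j" "i \<in> {1..r}" "j \<in> {1..r}" "r - 1 \<in> Z"
  shows "PhiC r Z i j \<longleftrightarrow> ((i + 1 = j \<or> j + 1 = i) \<and> max i j \<le> r - 2 \<or>
     ({i, j} = {r - 2, r - 1} \<or> {i, j} = {r - 2, r} \<or> {i, j} = {r - 1, r}))"
  using assms unfolding PhiC_def doubleton_eq_iff max_def by auto

lemma condD: assumes "r \<ge> 3" "i \<noteq> j" "i \<in> {1..r}" "j \<in> {1..r}" "r - 1 \<notin> Z"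
  shows "PhiC r Z i j \<longleftrightarrow> ((i + 1 = j \<or> j + 1 = i) \<and> max i j \<le> r - 1 \<or>
     {i, j} = {r - 2, r})"
  using assms unfolding PhiC_def doubleton_eq_iff max_def by auto

theorem proposition3p11:
  fixes r :: nat and Y Z :: "nat set"
  assumes "r \<ge> 3" and "Y \<subseteq> {1..r-1}" and "Z \<subseteq> {1..r-1}"
  shows "(r - 1 \<in> Z \<longrightarrow> of_type_D' r (cartan (Phi r Z)))
       \<and> (r - 1 \<notin> Z \<longrightarrow> of_type r (cartan (Phi r Z)) (cartan_D r))
       \<and> (r - 1 \<in> Y \<longrightarrow> of_type r (cartan (Psi r Y)) (cartan_C r))
       \<and> (r - 1 \<notin> Y \<longrightarrow> of_type r (cartan (Psi r Y)) (cartan_A r))"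
proof -
  have sup01: "Sup {0, 1::nat} = 1" by (simp add: cSup_insert_If sup_nat_def)
  have sup012: "Sup {0, 1, 2::nat} = 2" by (simp add: cSup_insert_If sup_nat_def)
  have phi: "cartan (Phi r Z) i j = (if PhiC r Z i j then -1 else 0)"
    if "i \<in> {1..r}" "j \<in> {1..r}" "i \<noteq> j" for i j
    using Phi_set[OF that(3,1,2) assms(1,3)] sup01 that(3) by (simp add: cartan_F)
  have psiset: "{k. PsiC r Y i j k} = (if i = r-1 \<and> j = r \<and> r-1\<in>Y then {0,1,2}
      else if (i+1=j \<or> j+1=i) \<and> max i j \<le> r then {0,1} else {0})" for i j
    unfolding PsiC_def using assms(1) by auto
  have psi: "cartan (Psi r Y) i j = (if i = r-1 \<and> j = r \<and> r-1\<in>Y then -2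
      else if (i+1=j \<or> j+1=i) then -1 else 0)"
    if "i \<in> {1..r}" "j \<in> {1..r}" "i \<noteq> j" for i j
  proof -
    have m: "max i j \<le> r" using that by simp
    show ?thesis
      using Psi_set[OF that(3,1,2) assms(1,2)] psiset[of i j] sup01 sup012 that(3) m
      by (simp add: cartan_F)
  qed
  have A: "r - 1 \<in> Z \<longrightarrow> of_type_D' r (cartan (Phi r Z))"
  proof (intro impI, unfold of_type_D'_def, intro ballI)
    fix i j assume h: "r - 1 \<in> Z" "i \<in> {1..r}" "j \<in> {1..r}"
    show "cartan (Phi r Z) i j = cartan_D' r i j"
    proof (cases "i = j")
      case True then show ?thesis by (simp add: cartan_def cartan_D'_def)
    next
      case False
      show ?thesis using phi[OF h(2,3) False] condD'[OF assms(1) False h(2,3,1)] False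
        unfolding cartan_D'_def by simp
    qed
  qed
  have B: "r - 1 \<notin> Z \<longrightarrow> of_type r (cartan (Phi r Z)) (cartan_D r)"
  proof (intro impI, unfold of_type_def, intro exI[of _ id] conjI ballI)
    show "bij_betw id {1..r} {1..r}" by simp
    fix i j assume h: "r - 1 \<notin> Z" "i \<in> {1..r}" "j \<in> {1..r}"
    show "cartan (Phi r Z) (id i) (id j) = cartan_D r i j"
    proof (cases "i = j")
      case True then show ?thesis by (simp add: cartan_def cartan_D_def)
    next
      case False
      show ?thesis using phi[OF h(2,3) False] condD[OF assms(1) False h(2,3,1)] False
        unfolding cartan_D_def by simp
    qed
  qed
  have C: "r - 1 \<in> Y \<longrightarrow> of_type r (cartan (Psi r Y)) (cartan_C r)"
  proof (intro impI, unfold of_type_def, intro exI[of _ id] conjI ballI)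
    show "bij_betw id {1..r} {1..r}" by simp
    fix i j assume h: "r - 1 \<in> Y" "i \<in> {1..r}" "j \<in> {1..r}"
    show "cartan (Psi r Y) (id i) (id j) = cartan_C r i j"
    proof (cases "i = j")
      case True then show ?thesis by (simp add: cartan_def cartan_C_def)
    next
      case False
      show ?thesis using psi[OF h(2,3) False] False h(1)
        unfolding cartan_C_def by simp
    qed
  qed
  have D: "r - 1 \<notin> Y \<longrightarrow> of_type r (cartan (Psi r Y)) (cartan_A r)"
  proof (intro impI, unfold of_type_def, intro exI[of _ id] conjI ballI)
    show "bij_betw id {1..r} {1..r}" by simp
    fix i j assume h: "r - 1 \<notin> Y" "i \<in> {1..r}" "j \<in> {1..r}"
    show "cartan (Psi r Y) (id i) (id j) = cartan_A r i j"
    proof (cases "i = j")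
      case True then show ?thesis by (simp add: cartan_def cartan_A_def)
    next
      case False
      show ?thesis using psi[OF h(2,3) False] False h(1)
        unfolding cartan_A_def by simp
    qed
  qed
  show ?thesis using A B C D by blast
qed

end
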